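(* Let $V$ be a vector space. For sentences $S=S_1|\cdots|S_n$ and $W=W_1|\cdots|W_k$ in $T(T(V)_+)$ with all $S_i,W_j\in T(V)_+$ and $n,k\ge1$: $S*W=\sum_{f}\big(S_1*W_{f^{-1}(\{1\})}\big)|\cdots|\big(S_n*W_{f^{-1}(\{n\})}\big)$, where the sum runs over all injective maps $f:\{1,\dots,k\}\hookrightarrow\{1,\dots,n\}$ (so the sum is $0$ if $k>n$).
   Context: $T(V)_+=\bigoplus_{n\ge1}V^{\otimes n}$ with $*$ the concatenation product of $T(V)$. $T(T(V)_+)$ is the tensor Hopf algebra on $T(V)_+$ (sentences), product $|$, elements of $T(V)_+$ primitive. For $I=\{i_1<\dots<i_l\}\subseteq\{1,\dots,k\}$, $W_I=W_{i_1}|\cdots|W_{i_l}$, and $W_\emptyset=1$. The product $*$ is extended to $T(T(V)_+)$ as the unique bilinear map with, for all $f,g,h\in T(T(V)_+)$ and $y\in T(V)_+$: $\varepsilon(f*g)=\varepsilon(f)\varepsilon(g)$; $\Delta(f*g)=\Delta(f)*\Delta(g)$; $f*1=f$; $1*f=\varepsilon(f)1$; $f*(g|y)=(f*g)*y-f*(g*y)$; $(f|g)*h=(f*h^{(1)})|(g*h^{(2)})$; $(f*g)*h=f*\big((g*h^{(1)})|h^{(2)}\big)$. *)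

theory Defs
  imports "HOL-Library.FuncSet"
begin

text \<open>
  V is the free vector space over a field 'k with basis 'a (every vector space
  has a basis). T(V) is represented by finitely supported coefficient functions on
  words ('a list), T(V)_+ by those vanishing on the empty word. T(T(V)_+) is
  represented by finitely supported coefficient functions on sentences
  ('a list list) supported on sentences all of whose words are nonempty.
  Tensors in T(T(V)_+) (x) T(T(V)_+) are coefficient functions on pairs of sentences.
\<close>

type_synonym ('a,'k) tv = "'a list \<Rightarrow> 'k"
type_synonym ('a,'k) tt = "'a list list \<Rightarrow> 'k"
type_synonym ('a,'k) tt2 = "'a list list \<times> 'a list list \<Rightarrow> 'k"

definition fsupp :: "('b \<Rightarrow> 'k::zero) \<Rightarrow> bool" where
  "fsupp f \<longleftrightarrow> finite {s. f s \<noteq> 0}"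

definition TVp :: "('a,'k::zero) tv set" where
  "TVp = {w. fsupp w \<and> w [] = 0}"

definition TTp :: "('a,'k::zero) tt set" where
  "TTp = {x. fsupp x \<and> (\<forall>s. x s \<noteq> 0 \<longrightarrow> (\<forall>w\<in>set s. w \<noteq> []))}"

definition vadd :: "('b \<Rightarrow> 'k::comm_ring_1) \<Rightarrow> ('b \<Rightarrow> 'k) \<Rightarrow> 'b \<Rightarrow> 'k" where
  "vadd f g = (\<lambda>s. f s + g s)"
definition vsub :: "('b \<Rightarrow> 'k::comm_ring_1) \<Rightarrow> ('b \<Rightarrow> 'k) \<Rightarrow> 'b \<Rightarrow> 'k" where
  "vsub f g = (\<lambda>s. f s - g s)"
definition vsmul :: "'k::comm_ring_1 \<Rightarrow> ('b \<Rightarrow> 'k) \<Rightarrow> 'b \<Rightarrow> 'k" where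
  "vsmul c f = (\<lambda>s. c * f s)"
definition vzero :: "'b \<Rightarrow> 'k::comm_ring_1" where
  "vzero = (\<lambda>s. 0)"
definition vsum :: "('i \<Rightarrow> 'b \<Rightarrow> 'k::comm_ring_1) \<Rightarrow> 'i set \<Rightarrow> 'b \<Rightarrow> 'k" where
  "vsum F I = (\<lambda>s. \<Sum>i\<in>I. F i s)"

definition delta :: "'b \<Rightarrow> 'b \<Rightarrow> 'k::comm_ring_1" where
  "delta b = (\<lambda>s. if s = b then 1 else 0)"

definition tvcat :: "('a,'k::comm_ring_1) tv \<Rightarrow> ('a,'k) tv \<Rightarrow> ('a,'k) tv" where
  "tvcat u w = (\<lambda>x. \<Sum>i\<le>length x. u (take i x) * w (drop i x))"

definition bar :: "('a,'k::comm_ring_1) tt \<Rightarrow> ('a,'k) tt \<Rightarrow> ('a,'k) tt" where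
  "bar f g = (\<lambda>u. \<Sum>i\<le>length u. f (take i u) * g (drop i u))"

definition one :: "('a,'k::comm_ring_1) tt" where
  "one = delta []"

definition eps :: "('a,'k::comm_ring_1) tt \<Rightarrow> 'k" where
  "eps f = f []"

definition emb :: "('a,'k::comm_ring_1) tv \<Rightarrow> ('a,'k) tt" where
  "emb w = (\<lambda>s. case s of [v] \<Rightarrow> w v | _ \<Rightarrow> 0)"

text \<open>Interleaving of p and q according to the position set I of p\<close>
definition merge :: "nat set \<Rightarrow> 'b list \<Rightarrow> 'b list \<Rightarrow> 'b list" where
  "merge I p q = map (\<lambda>i. if i \<in> I then p ! card {j\<in>I. j < i}
                                   else q ! card {j. j < i \<and> j \<notin> I})
                     [0..<length p + length q]"

text \<open>Deshuffle coproduct of the tensor Hopf algebra T(T(V)_+) (words of T(V)_+ primitive)\<close>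
definition Delta :: "('a,'k::comm_ring_1) tt \<Rightarrow> ('a,'k) tt2" where
  "Delta x = (\<lambda>(p,q). \<Sum>I\<in>{I. I \<subseteq> {..<length p + length q} \<and> card I = length p}.
                        x (merge I p q))"

definition tens :: "('a,'k::comm_ring_1) tt \<Rightarrow> ('a,'k) tt \<Rightarrow> ('a,'k) tt2" where
  "tens f g = (\<lambda>(p,q). f p * g q)"

text \<open>Sweedler-type expansion: for a finitely supported tensor X = sum of X(p,q) p (x) q,
  tsum X F = sum of X(p,q) F(p,q), F evaluated on the basis sentences.\<close>
definition tsum :: "('a,'k::comm_ring_1) tt2 \<Rightarrow> (('a,'k) tt \<Rightarrow> ('a,'k) tt \<Rightarrow> ('b \<Rightarrow> 'k)) \<Rightarrow> 'b \<Rightarrow> 'k" where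
  "tsum X F = vsum (\<lambda>pq. vsmul (X pq) (F (delta (fst pq)) (delta (snd pq)))) {pq. X pq \<noteq> 0}"

definition is_star_ext :: "(('a,'k::comm_ring_1) tt \<Rightarrow> ('a,'k) tt \<Rightarrow> ('a,'k) tt) \<Rightarrow> bool" where
  "is_star_ext st \<longleftrightarrow>
    (\<forall>f\<in>TTp. \<forall>g\<in>TTp. st f g \<in> TTp) \<and>
    (\<forall>f\<in>TTp. \<forall>g\<in>TTp. \<forall>h\<in>TTp. \<forall>c.
        st (vadd (vsmul c f) g) h = vadd (vsmul c (st f h)) (st g h) \<and>
        st h (vadd (vsmul c f) g) = vadd (vsmul c (st h f)) (st h g)) \<and>
    (\<forall>u\<in>TVp. \<forall>w\<in>TVp. st (emb u) (emb w) = emb (tvcat u w)) \<and>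
    (\<forall>f\<in>TTp. \<forall>g\<in>TTp. eps (st f g) = eps f * eps g) \<and>
    (\<forall>f\<in>TTp. \<forall>g\<in>TTp. Delta (st f g) =
        tsum (Delta f) (\<lambda>a b. tsum (Delta g) (\<lambda>c d. tens (st a c) (st b d)))) \<and>
    (\<forall>f\<in>TTp. st f one = f) \<and>
    (\<forall>f\<in>TTp. st one f = vsmul (eps f) one) \<and>
    (\<forall>f\<in>TTp. \<forall>g\<in>TTp. \<forall>y\<in>TVp.
        st f (bar g (emb y)) = vsub (st (st f g) (emb y)) (st f (st g (emb y)))) \<and>
    (\<forall>f\<in>TTp. \<forall>g\<in>TTp. \<forall>h\<in>TTp.
        st (bar f g) h = tsum (Delta h) (\<lambda>a b. bar (st f a) (st g b))) \<and>
    (\<forall>f\<in>TTp. \<forall>g\<in>TTp. \<forall>h\<in>TTp.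
        st (st f g) h = st f (tsum (Delta h) (\<lambda>a b. bar (st g a) b)))"

definition bars :: "('a,'k::comm_ring_1) tt list \<Rightarrow> ('a,'k) tt" where
  "bars xs = foldr bar xs one"

definition W_sub :: "(nat \<Rightarrow> ('a,'k::comm_ring_1) tv) \<Rightarrow> nat set \<Rightarrow> ('a,'k) tt" where
  "W_sub W I = bars (map (\<lambda>j. emb (W j)) (sorted_list_of_set I))"

end

theory Submission
  imports Defs
begin


definition conv :: "('b list \<Rightarrow> 'k::comm_ring_1) \<Rightarrow> ('b list \<Rightarrow> 'k) \<Rightarrow> 'b list \<Rightarrow> 'k" where
  "conv u w = (\<lambda>x. \<Sum>i\<le>length x. u (take i x) * w (drop i x))"

lemma tvcat_conv: "tvcat = conv" by (simp add: fun_eq_iff tvcat_def conv_def)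
lemma bar_conv: "bar = conv" by (simp add: fun_eq_iff bar_def conv_def)

lemma dsum: "(\<Sum>i\<le>n. \<Sum>j\<le>i. g j i) = (\<Sum>j\<le>n. \<Sum>l\<le>n-j. g j (j+l::nat)) " 
proof (induction n)
  case 0 then show ?case by simp
next
  case (Suc n)
  have "(\<Sum>j\<le>Suc n. \<Sum>l\<le>Suc n-j. g j (j+l)) = (\<Sum>j\<le>n. \<Sum>l\<le>Suc n-j. g j (j+l)) + g (Suc n) (Suc n)"
    by simp
  also have "(\<Sum>j\<le>n. \<Sum>l\<le>Suc n-j. g j (j+l)) = (\<Sum>j\<le>n. (\<Sum>l\<le>n-j. g j (j+l)) + g j (Suc n))"
  proof (rule sum.cong)
    fix j assume "j \<in> {..n}"
    then have "Suc n - j = Suc (n-j)" "j + Suc (n-j) = Suc n" by auto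
    then show "(\<Sum>l\<le>Suc n-j. g j (j+l)) = (\<Sum>l\<le>n-j. g j (j+l)) + g j (Suc n)" by simp
  qed simp
  finally show ?case using Suc by (simp add: sum.distrib add.assoc)
qed

lemma conv_assoc: "conv (conv a b) c = conv a (conv b (c::'b list \<Rightarrow> 'k::comm_ring_1))"
proof
  fix x :: "'b list"
  let ?N = "length x"
  have "conv (conv a b) c x = (\<Sum>i\<le>?N. \<Sum>j\<le>i. a (take j x) * b (take (i-j) (drop j x)) * c (drop i x))"
    unfolding conv_def by (auto simp: sum_distrib_right min_def take_take drop_take intro!: sum.cong)
  also have "\<dots> = (\<Sum>j\<le>?N. \<Sum>l\<le>?N-j. a (take j x) * b (take l (drop j x)) * c (drop (j+l) x))"
    by (subst dsum) simp
  also have "\<dots> = conv a (conv b c) x"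
    unfolding conv_def by (auto simp: sum_distrib_left mult.assoc add.commute intro!: sum.cong)
  finally show "conv (conv a b) c x = conv a (conv b c) x" .
qed

lemma conv_unit_left: "conv (delta []) (w::'b list \<Rightarrow> 'k::comm_ring_1) = w"
proof
  fix x :: "'b list"
  show "conv (delta []) w x = w x"
    by (cases x) (simp_all add: conv_def delta_def sum.atMost_Suc_shift del: sum.atMost_Suc)
qed

lemma conv_unit_right: "conv (w::'b list \<Rightarrow> 'k::comm_ring_1) (delta []) = w"
proof
  fix x :: "'b list"
  have "conv w (delta []) x = (\<Sum>i\<le>length x. if i = length x then w x else 0)"
    unfolding conv_def delta_def by (intro sum.cong) auto
  then show "conv w (delta []) x = w x" by simp
qed


lemma conv_nz: "conv u w x \<noteq> 0 \<Longrightarrow> \<exists>i. u (take i x) \<noteq> 0 \<and> w (drop i x) \<noteq> 0"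
  unfolding conv_def by (metis (no_types, lifting) mult_not_zero sum.neutral)

lemma fsupp_conv: assumes "fsupp u" "fsupp w" shows "fsupp (conv u w)"
proof -
  have "{x. conv u w x \<noteq> 0} \<subseteq> (\<lambda>(a,b). a @ b) ` ({a. u a \<noteq> 0} \<times> {b. w b \<noteq> 0})"
  proof
    fix x assume "x \<in> {x. conv u w x \<noteq> 0}"
    then obtain i where "u (take i x) \<noteq> 0" "w (drop i x) \<noteq> 0" using conv_nz by blast
    then show "x \<in> (\<lambda>(a,b). a @ b) ` ({a. u a \<noteq> 0} \<times> {b. w b \<noteq> 0})"
      by (intro image_eqI[of _ _ "(take i x, drop i x)"]) auto
  qed
  moreover have "finite ((\<lambda>(a,b). a @ b) ` ({a. u a \<noteq> 0} \<times> {b. w b \<noteq> 0}))"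
    using assms unfolding fsupp_def by auto
  ultimately show ?thesis unfolding fsupp_def by (rule finite_subset)
qed

lemma TTp_I: "fsupp x \<Longrightarrow> (\<And>s w. x s \<noteq> 0 \<Longrightarrow> w \<in> set s \<Longrightarrow> w \<noteq> []) \<Longrightarrow> x \<in> TTp"
  unfolding TTp_def by auto

lemma TTp_D: "x \<in> TTp \<Longrightarrow> fsupp x" "x \<in> TTp \<Longrightarrow> x s \<noteq> 0 \<Longrightarrow> w \<in> set s \<Longrightarrow> w \<noteq> []"
  unfolding TTp_def by auto

lemma bar_TTp: assumes "f \<in> TTp" "g \<in> TTp" shows "bar f g \<in> TTp"
proof (rule TTp_I)
  show "fsupp (bar f g)" using assms TTp_D(1) fsupp_conv bar_conv by metis
next
  fix s w assume "bar f g s \<noteq> 0" "w \<in> set s"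
  then obtain i where i: "f (take i s) \<noteq> 0" "g (drop i s) \<noteq> 0" using conv_nz bar_conv by metis
  have "w \<in> set (take i s) \<or> w \<in> set (drop i s)" using \<open>w \<in> set s\<close>
    by (metis Un_iff append_take_drop_id set_append)
  then show "w \<noteq> []" using i assms TTp_D(2) by metis
qed

lemma tvcat_TVp: assumes "u \<in> TVp" "w \<in> TVp" shows "tvcat u w \<in> TVp"
  using assms fsupp_conv[of u w] unfolding TVp_def tvcat_conv by (simp add: conv_def)

lemma fsupp_sub: "fsupp g \<Longrightarrow> (\<And>s. f s \<noteq> 0 \<Longrightarrow> g s \<noteq> 0) \<Longrightarrow> fsupp f"
  unfolding fsupp_def by (metis (mono_tags, lifting) mem_Collect_eq rev_finite_subset subsetI)

lemma vzero_TTp: "vzero \<in> TTp" by (rule TTp_I) (auto simp: fsupp_def vzero_def)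
lemma one_TTp: "one \<in> TTp" by (rule TTp_I) (auto simp: fsupp_def one_def delta_def split: if_splits)
lemma delta_TTp: "v \<noteq> [] \<Longrightarrow> delta [v] \<in> TTp" by (rule TTp_I) (auto simp: fsupp_def delta_def split: if_splits)

lemma vadd_TTp: assumes "f \<in> TTp" "g \<in> TTp" shows "vadd f g \<in> TTp"
proof (rule TTp_I)
  have "{s. vadd f g s \<noteq> 0} \<subseteq> {s. f s \<noteq> 0} \<union> {s. g s \<noteq> 0}" by (auto simp: vadd_def)
  then show "fsupp (vadd f g)" unfolding fsupp_def
    by (rule finite_subset) (use TTp_D(1)[OF assms(1)] TTp_D(1)[OF assms(2)] in \<open>auto simp: fsupp_def\<close>)
next
  fix s w assume "vadd f g s \<noteq> 0" "w \<in> set s"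
  then have "f s \<noteq> 0 \<or> g s \<noteq> 0" by (auto simp: vadd_def)
  then show "w \<noteq> []" using TTp_D(2)[OF assms(1)] TTp_D(2)[OF assms(2)] \<open>w \<in> set s\<close> by blast
qed

lemma vsmul_TTp: assumes "f \<in> TTp" shows "vsmul c f \<in> TTp"
proof (rule TTp_I)
  show "fsupp (vsmul c f)" using TTp_D(1)[OF assms] by (rule fsupp_sub) (auto simp: vsmul_def)
next
  fix s w assume "vsmul c f s \<noteq> 0" "w \<in> set s"
  then have "f s \<noteq> 0" by (auto simp: vsmul_def)
  then show "w \<noteq> []" using TTp_D(2)[OF assms(1)] \<open>w \<in> set s\<close> by blast
qed

lemma vsub_TTp: assumes "f \<in> TTp" "g \<in> TTp" shows "vsub f g \<in> TTp"
proof -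
  have "vsub f g = vadd f (vsmul (-1) g)" by (simp add: fun_eq_iff vsub_def vadd_def vsmul_def)
  then show ?thesis by (simp add: vadd_TTp vsmul_TTp assms)
qed

lemma vsum_TTp: assumes "\<And>a. a \<in> A \<Longrightarrow> F a \<in> TTp" shows "vsum F A \<in> TTp"
proof (cases "finite A")
  case True then show ?thesis using assms
  proof (induction A rule: finite_induct)
    case empty then show ?case using vzero_TTp by (simp add: vsum_def vzero_def)
  next
    case (insert a A)
    have "vsum F (insert a A) = vadd (F a) (vsum F A)" using insert by (simp add: fun_eq_iff vsum_def vadd_def)
    then show ?case by (simp add: vadd_TTp insert)
  qed
next
  case False then show ?thesis using vzero_TTp by (simp add: vsum_def vzero_def)
qed

lemma emb_TTp: assumes "w \<in> TVp" shows "emb w \<in> TTp"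
proof (rule TTp_I)
  have "{s. emb w s \<noteq> 0} \<subseteq> (\<lambda>v. [v]) ` {v. w v \<noteq> 0}"
  proof
    fix s assume "s \<in> {s. emb w s \<noteq> 0}"
    then show "s \<in> (\<lambda>v. [v]) ` {v. w v \<noteq> 0}" by (cases s rule: remdups_adj.cases) (auto simp: emb_def)
  qed
  then show "fsupp (emb w)" unfolding fsupp_def
    by (rule finite_subset) (use assms in \<open>auto simp: TVp_def fsupp_def\<close>)
next
  fix s v assume "emb w s \<noteq> 0" "v \<in> set s"
  then show "v \<noteq> []" using assms unfolding TVp_def by (cases s rule: remdups_adj.cases) (auto simp: emb_def)
qed

lemma bar_one_left: "bar one f = f" unfolding bar_conv one_def by (rule conv_unit_left)
lemma bar_one_right: "bar f one = f" unfolding bar_conv one_def by (rule conv_unit_right)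
lemma bar_assoc: "bar (bar f g) h = bar f (bar g h)" unfolding bar_conv by (rule conv_assoc)
lemma tvcat_assoc: "tvcat (tvcat f g) h = tvcat f (tvcat g h)" unfolding tvcat_conv by (rule conv_assoc)

lemma bars_append: "bars (xs @ ys) = bar (bars xs) (bars ys)"
  by (induction xs) (simp_all add: bars_def bar_one_left bar_assoc)

lemma bars_single: "bars [x] = x" by (simp add: bars_def bar_one_right)

lemma bars_TTp: "(\<And>x. x \<in> set xs \<Longrightarrow> x \<in> TTp) \<Longrightarrow> bars xs \<in> TTp"
  by (induction xs) (simp_all add: bars_def one_TTp bar_TTp)

lemma bar_vsum_left: "bar (vsum (\<lambda>a. vsmul (c a) (g a)) A) h = vsum (\<lambda>a. vsmul (c a) (bar (g a) h)) A"
  by (simp add: fun_eq_iff bar_def vsum_def vsmul_def sum_distrib_left sum_distrib_right mult.assoc sum.swap[of _ A])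

lemma bar_vsum_right: "bar h (vsum (\<lambda>a. vsmul (c a) (g a)) A) = vsum (\<lambda>a. vsmul (c a) (bar h (g a))) A"
  by (simp add: fun_eq_iff bar_def vsum_def vsmul_def sum_distrib_left sum_distrib_right mult.left_commute sum.swap[of _ A])

lemma bar_vsum_left': "bar (vsum g A) h = vsum (\<lambda>a. bar (g a) h) A"
  by (simp add: fun_eq_iff bar_def vsum_def sum_distrib_right sum.swap[of _ A])

lemma bar_vsum_right': "bar h (vsum g A) = vsum (\<lambda>a. bar h (g a)) A"
  by (simp add: fun_eq_iff bar_def vsum_def sum_distrib_left sum.swap[of _ A])



lemma emb_nz: "emb y s \<noteq> 0 \<Longrightarrow> \<exists>v. s = [v]"
  by (cases s rule: remdups_adj.cases) (auto simp: emb_def)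

lemma length_merge: "length (merge I p q) = length p + length q"
  by (simp add: merge_def)

lemma Delta_emb_0: assumes "length p + length q \<noteq> 1" shows "Delta (emb y) (p,q) = 0"
proof -
  have "Delta (emb y) (p,q) = (\<Sum>I\<in>{I. I \<subseteq> {..<length p + length q} \<and> card I = length p}. emb y (merge I p q))"
    by (simp add: Delta_def)
  also have "\<dots> = 0"
  proof (rule sum.neutral, rule ballI)
    fix I
    show "emb y (merge I p q) = 0"
    proof (rule ccontr)
      assume "emb y (merge I p q) \<noteq> 0"
      then obtain v where "merge I p q = [v]" using emb_nz by blast
      then have "length (merge I p q) = 1" by simp
      then show False using assms by (simp add: length_merge)
    qed
  qed
  finally show ?thesis .
qed

lemma Delta_emb_1: "Delta (emb y) ([v],[]) = y v"
proof -
  have "{I. I \<subseteq> {..<length [v] + length []} \<and> card I = length [v]} = {{0::nat}}"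
    by (auto simp: subset_singleton_iff lessThan_Suc)
  then show ?thesis by (simp add: Delta_def merge_def emb_def)
qed

lemma Delta_emb_2: "Delta (emb y) ([],[v]) = y v"
proof -
  have "{I. I \<subseteq> {..<length [] + length [v]} \<and> card I = length []} = {{}::nat set}"
    by (auto simp: subset_singleton_iff lessThan_Suc)
  then show ?thesis by (simp add: Delta_def merge_def emb_def)
qed

lemma Delta_emb_supp:
  "{pq. Delta (emb y) pq \<noteq> 0} = (\<lambda>v. ([v],[])) ` {v. y v \<noteq> 0} \<union> (\<lambda>v. ([],[v])) ` {v. y v \<noteq> 0}"
proof (intro equalityI subsetI)
  fix pq assume "pq \<in> {pq. Delta (emb y) pq \<noteq> 0}"
  then obtain p q where pq: "pq = (p,q)" "Delta (emb y) (p,q) \<noteq> 0" by (cases pq) auto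
  then have "length p + length q = 1" using Delta_emb_0 by blast
  then have "(\<exists>v. p = [v] \<and> q = []) \<or> (\<exists>v. p = [] \<and> q = [v])"
    by (cases p; cases q) auto
  then show "pq \<in> (\<lambda>v. ([v],[])) ` {v. y v \<noteq> 0} \<union> (\<lambda>v. ([],[v])) ` {v. y v \<noteq> 0}"
    using pq by (auto simp: Delta_emb_1 Delta_emb_2)
qed (auto simp: Delta_emb_1 Delta_emb_2)

lemma tsum_Delta_emb:
  assumes "y \<in> TVp"
  shows "tsum (Delta (emb y)) F = vadd (vsum (\<lambda>v. vsmul (y v) (F (delta [v]) one)) {v. y v \<noteq> 0})
                                      (vsum (\<lambda>v. vsmul (y v) (F one (delta [v]))) {v. y v \<noteq> 0})"
proof
  fix s
  let ?Y = "{v. y v \<noteq> 0}"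
  have fin: "finite ?Y" using assms by (simp add: TVp_def fsupp_def)
  let ?g = "\<lambda>pq. Delta (emb y) pq * F (delta (fst pq)) (delta (snd pq)) s"
  have "tsum (Delta (emb y)) F s = sum ?g ((\<lambda>v. ([v],[])) ` ?Y \<union> (\<lambda>v. ([],[v])) ` ?Y)"
    by (simp add: tsum_def vsum_def vsmul_def Delta_emb_supp)
  also have "\<dots> = sum ?g ((\<lambda>v. ([v],[])) ` ?Y) + sum ?g ((\<lambda>v. ([],[v])) ` ?Y)"
    by (rule sum.union_disjoint) (use fin in auto)
  also have "sum ?g ((\<lambda>v. ([v],[])) ` ?Y) = (\<Sum>v\<in>?Y. ?g ([v],[]))"
    by (subst sum.reindex) (auto simp: inj_on_def)
  also have "sum ?g ((\<lambda>v. ([],[v])) ` ?Y) = (\<Sum>v\<in>?Y. ?g ([],[v]))"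
    by (subst sum.reindex) (auto simp: inj_on_def)
  finally show "tsum (Delta (emb y)) F s = vadd (vsum (\<lambda>v. vsmul (y v) (F (delta [v]) one)) ?Y)
                                      (vsum (\<lambda>v. vsmul (y v) (F one (delta [v]))) ?Y) s"
    by (simp add: vadd_def vsum_def vsmul_def Delta_emb_1 Delta_emb_2 one_def)
qed

lemma emb_decomp:
  assumes "y \<in> TVp"
  shows "emb y = vsum (\<lambda>v. vsmul (y v) (delta [v])) {v. y v \<noteq> 0}"
proof
  fix s
  have fin: "finite {v. y v \<noteq> 0}" using assms by (simp add: TVp_def fsupp_def)
  show "emb y s = vsum (\<lambda>v. vsmul (y v) (delta [v])) {v. y v \<noteq> 0} s"
  proof (cases s rule: remdups_adj.cases)
    case (2 v0)
    have "(\<Sum>v\<in>{v. y v \<noteq> 0}. y v * (if [v0] = [v] then 1 else 0)) = (\<Sum>v\<in>{v. y v \<noteq> 0}. if v = v0 then y v else 0)"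
      by (intro sum.cong) auto
    also have "\<dots> = y v0" using fin by (simp add: sum.delta')
    finally show ?thesis using 2 by (simp add: emb_def vsum_def vsmul_def delta_def)
  qed (auto simp: emb_def vsum_def vsmul_def delta_def)
qed



context
  fixes st :: "('a,'k::field) tt \<Rightarrow> ('a,'k) tt \<Rightarrow> ('a,'k) tt"
  assumes ST: "is_star_ext st"
begin

lemma st_TTp: "f \<in> TTp \<Longrightarrow> g \<in> TTp \<Longrightarrow> st f g \<in> TTp"
  using ST[unfolded is_star_ext_def, THEN conjunct1] by blast
lemma st_lin_left: "f \<in> TTp \<Longrightarrow> g \<in> TTp \<Longrightarrow> h \<in> TTp \<Longrightarrow>
    st (vadd (vsmul c f) g) h = vadd (vsmul c (st f h)) (st g h)"
  using ST[unfolded is_star_ext_def, THEN conjunct2, THEN conjunct1] by blast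
lemma st_lin_right: "f \<in> TTp \<Longrightarrow> g \<in> TTp \<Longrightarrow> h \<in> TTp \<Longrightarrow>
    st h (vadd (vsmul c f) g) = vadd (vsmul c (st h f)) (st h g)"
  using ST[unfolded is_star_ext_def, THEN conjunct2, THEN conjunct1] by blast
lemma st_emb: "u \<in> TVp \<Longrightarrow> w \<in> TVp \<Longrightarrow> st (emb u) (emb w) = emb (tvcat u w)"
  using ST[unfolded is_star_ext_def, THEN conjunct2, THEN conjunct2, THEN conjunct1] by blast
lemma st_one_right: "f \<in> TTp \<Longrightarrow> st f one = f"
  using ST[unfolded is_star_ext_def, THEN conjunct2, THEN conjunct2, THEN conjunct2, THEN conjunct2, THEN conjunct2, THEN conjunct1] by blast
lemma st_one_left: "f \<in> TTp \<Longrightarrow> st one f = vsmul (eps f) one"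
  using ST[unfolded is_star_ext_def, THEN conjunct2, THEN conjunct2, THEN conjunct2, THEN conjunct2, THEN conjunct2, THEN conjunct2, THEN conjunct1] by blast
lemma st_recB: "f \<in> TTp \<Longrightarrow> g \<in> TTp \<Longrightarrow> y \<in> TVp \<Longrightarrow>
    st f (bar g (emb y)) = vsub (st (st f g) (emb y)) (st f (st g (emb y)))"
  using ST[unfolded is_star_ext_def, THEN conjunct2, THEN conjunct2, THEN conjunct2, THEN conjunct2, THEN conjunct2, THEN conjunct2, THEN conjunct2, THEN conjunct1] by blast
lemma st_barA: "f \<in> TTp \<Longrightarrow> g \<in> TTp \<Longrightarrow> h \<in> TTp \<Longrightarrow>
    st (bar f g) h = tsum (Delta h) (\<lambda>a b. bar (st f a) (st g b))"
  using ST[unfolded is_star_ext_def, THEN conjunct2, THEN conjunct2, THEN conjunct2, THEN conjunct2, THEN conjunct2, THEN conjunct2, THEN conjunct2, THEN conjunct2, THEN conjunct1] by blast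

lemma st_zero_right: assumes "h \<in> TTp" shows "st h vzero = vzero"
proof -
  have e: "vadd (vsmul 1 vzero) vzero = (vzero :: ('a,'k) tt)" by (simp add: fun_eq_iff vadd_def vsmul_def vzero_def)
  define X where "X = st h vzero"
  have H: "X = vadd (vsmul 1 X) X"
    using st_lin_right[OF vzero_TTp vzero_TTp assms, of 1] unfolding e X_def .
  have "X s = 0" for s
  proof -
    have "X s = vadd (vsmul 1 X) X s" using H by (rule fun_cong)
    also have "\<dots> = X s + X s" by (simp add: vadd_def vsmul_def)
    finally show "X s = 0" by (simp only: add_cancel_right_right)
  qed
  then show ?thesis unfolding X_def[symmetric] by (simp add: fun_eq_iff vzero_def)
qed

lemma st_zero_left: assumes "h \<in> TTp" shows "st vzero h = vzero"
proof -
  have e: "vadd (vsmul 1 vzero) vzero = (vzero :: ('a,'k) tt)" by (simp add: fun_eq_iff vadd_def vsmul_def vzero_def)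
  define X where "X = st vzero h"
  have H: "X = vadd (vsmul 1 X) X"
    using st_lin_left[OF vzero_TTp vzero_TTp assms, of 1] unfolding e X_def .
  have "X s = 0" for s
  proof -
    have "X s = vadd (vsmul 1 X) X s" using H by (rule fun_cong)
    also have "\<dots> = X s + X s" by (simp add: vadd_def vsmul_def)
    finally show "X s = 0" by (simp only: add_cancel_right_right)
  qed
  then show ?thesis unfolding X_def[symmetric] by (simp add: fun_eq_iff vzero_def)
qed

lemma st_lsum_right:
  assumes "finite A" "\<And>a. a \<in> A \<Longrightarrow> g a \<in> TTp" "h \<in> TTp"
  shows "st h (vsum (\<lambda>a. vsmul (c a) (g a)) A) = vsum (\<lambda>a. vsmul (c a) (st h (g a))) A"
  using assms(1,2)
proof (induction A rule: finite_induct)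
  case empty
  have "vsum (\<lambda>a. vsmul (c a) (g a)) {} = vzero" by (simp add: fun_eq_iff vsum_def vzero_def)
  then show ?case using st_zero_right[OF assms(3)] by (simp add: fun_eq_iff vsum_def vzero_def)
next
  case (insert a A)
  have "vsum (\<lambda>a. vsmul (c a) (g a)) (insert a A) = vadd (vsmul (c a) (g a)) (vsum (\<lambda>a. vsmul (c a) (g a)) A)"
    (is "_ = ?R") using insert by (simp add: fun_eq_iff vsum_def vadd_def)
  moreover have T: "vsum (\<lambda>a. vsmul (c a) (g a)) A \<in> TTp" using insert by (auto intro!: vsum_TTp vsmul_TTp)
  ultimately have "st h (vsum (\<lambda>a. vsmul (c a) (g a)) (insert a A)) =
      vadd (vsmul (c a) (st h (g a))) (st h (vsum (\<lambda>a. vsmul (c a) (g a)) A))"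
    by (simp only:) (rule st_lin_right, use insert assms(3) T in auto)
  also have "\<dots> = vadd (vsmul (c a) (st h (g a))) (vsum (\<lambda>a. vsmul (c a) (st h (g a))) A)"
    by (simp only: insert.IH[OF insert.prems[OF insertI2]])
  also have "\<dots> = vsum (\<lambda>a. vsmul (c a) (st h (g a))) (insert a A)"
    using insert(1,2) by (simp add: fun_eq_iff vsum_def vadd_def)
  finally show ?case .
qed

lemma st_lsum_left:
  assumes "finite A" "\<And>a. a \<in> A \<Longrightarrow> g a \<in> TTp" "h \<in> TTp"
  shows "st (vsum (\<lambda>a. vsmul (c a) (g a)) A) h = vsum (\<lambda>a. vsmul (c a) (st (g a) h)) A"
  using assms(1,2)
proof (induction A rule: finite_induct)
  case empty
  have "vsum (\<lambda>a. vsmul (c a) (g a)) {} = vzero" by (simp add: fun_eq_iff vsum_def vzero_def)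
  then show ?case using st_zero_left[OF assms(3)] by (simp add: fun_eq_iff vsum_def vzero_def)
next
  case (insert a A)
  have "vsum (\<lambda>a. vsmul (c a) (g a)) (insert a A) = vadd (vsmul (c a) (g a)) (vsum (\<lambda>a. vsmul (c a) (g a)) A)"
    (is "_ = ?R") using insert by (simp add: fun_eq_iff vsum_def vadd_def)
  moreover have T: "vsum (\<lambda>a. vsmul (c a) (g a)) A \<in> TTp" using insert by (auto intro!: vsum_TTp vsmul_TTp)
  ultimately have "st (vsum (\<lambda>a. vsmul (c a) (g a)) (insert a A)) h =
      vadd (vsmul (c a) (st (g a) h)) (st (vsum (\<lambda>a. vsmul (c a) (g a)) A) h)"
    by (simp only:) (rule st_lin_left, use insert assms(3) T in auto)
  also have "\<dots> = vadd (vsmul (c a) (st (g a) h)) (vsum (\<lambda>a. vsmul (c a) (st (g a) h)) A)"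
    by (simp only: insert.IH[OF insert.prems[OF insertI2]])
  also have "\<dots> = vsum (\<lambda>a. vsmul (c a) (st (g a) h)) (insert a A)"
    using insert(1,2) by (simp add: fun_eq_iff vsum_def vadd_def)
  finally show ?case .
qed

lemma vsum_smul1: "vsum (\<lambda>a. vsmul 1 (g a)) A = vsum g A"
  by (simp add: fun_eq_iff vsum_def vsmul_def)

lemma st_sum_right:
  assumes "finite A" "\<And>a. a \<in> A \<Longrightarrow> g a \<in> TTp" "h \<in> TTp"
  shows "st h (vsum g A) = vsum (\<lambda>a. st h (g a)) A"
  using st_lsum_right[OF assms, where c="\<lambda>_. 1"] by (simp add: vsum_smul1)

lemma st_sum_left:
  assumes "finite A" "\<And>a. a \<in> A \<Longrightarrow> g a \<in> TTp" "h \<in> TTp"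
  shows "st (vsum g A) h = vsum (\<lambda>a. st (g a) h) A"
  using st_lsum_left[OF assms, where c="\<lambda>_. 1"] by (simp add: vsum_smul1)

end


context
  fixes st :: "('a,'k::field) tt \<Rightarrow> ('a,'k) tt \<Rightarrow> ('a,'k) tt"
  assumes ST: "is_star_ext st"
begin

lemma bars_emb_TTp: "set xs \<subseteq> TVp \<Longrightarrow> bars (map emb xs) \<in> TTp"
  by (rule bars_TTp) (auto intro: emb_TTp)

lemma st_word:
  assumes "set xs \<subseteq> TVp" "y \<in> TVp"
  shows "st (bars (map emb xs)) (emb y) =
         vsum (\<lambda>i. bars (map emb (xs[i := tvcat (xs!i) y]))) {..<length xs}"
  using assms(1)
proof (induction xs)
  case Nil
  have "st one (emb y) = vsmul (eps (emb y)) one" using st_one_left[OF ST emb_TTp[OF assms(2)]] .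
  then show ?case by (simp add: fun_eq_iff bars_def vsmul_def vsum_def eps_def emb_def)
next
  case (Cons x xs)
  let ?R = "bars (map emb xs)"
  let ?Y = "{v. y v \<noteq> 0}"
  have xT: "x \<in> TVp" and xsT: "set xs \<subseteq> TVp" using Cons.prems by auto
  have RT: "?R \<in> TTp" using xsT by (rule bars_emb_TTp)
  have eT: "emb x \<in> TTp" using xT by (rule emb_TTp)
  have yT: "emb y \<in> TTp" using assms(2) by (rule emb_TTp)
  have finY: "finite ?Y" using assms(2) by (simp add: TVp_def fsupp_def)
  have dT: "delta [v] \<in> TTp" if "v \<in> ?Y" for v
  proof (rule delta_TTp)
    show "v \<noteq> []" using that assms(2) by (auto simp: TVp_def)
  qed
  have "st (bars (map emb (x # xs))) (emb y) = st (bar (emb x) ?R) (emb y)" by (simp add: bars_def)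
  also have "\<dots> = tsum (Delta (emb y)) (\<lambda>a b. bar (st (emb x) a) (st ?R b))"
    by (rule st_barA[OF ST eT RT yT])
  also have "\<dots> = vadd (vsum (\<lambda>v. vsmul (y v) (bar (st (emb x) (delta [v])) (st ?R one))) ?Y)
                       (vsum (\<lambda>v. vsmul (y v) (bar (st (emb x) one) (st ?R (delta [v])))) ?Y)"
    by (rule tsum_Delta_emb[OF assms(2)])
  also have "\<dots> = vadd (vsum (\<lambda>v. vsmul (y v) (bar (st (emb x) (delta [v])) ?R)) ?Y)
                       (vsum (\<lambda>v. vsmul (y v) (bar (emb x) (st ?R (delta [v])))) ?Y)"
    by (simp add: st_one_right[OF ST RT] st_one_right[OF ST eT])
  also have "vsum (\<lambda>v. vsmul (y v) (bar (st (emb x) (delta [v])) ?R)) ?Y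
           = bar (vsum (\<lambda>v. vsmul (y v) (st (emb x) (delta [v]))) ?Y) ?R"
    by (rule bar_vsum_left[symmetric])
  also have "vsum (\<lambda>v. vsmul (y v) (st (emb x) (delta [v]))) ?Y = st (emb x) (vsum (\<lambda>v. vsmul (y v) (delta [v])) ?Y)"
    by (rule st_lsum_right[OF ST finY dT eT, symmetric])
  also have "vsum (\<lambda>v. vsmul (y v) (delta [v])) ?Y = emb y"
    by (rule emb_decomp[OF assms(2), symmetric])
  also have "st (emb x) (emb y) = emb (tvcat x y)"
    by (rule st_emb[OF ST xT assms(2)])
  also have "vsum (\<lambda>v. vsmul (y v) (bar (emb x) (st ?R (delta [v])))) ?Y
           = bar (emb x) (vsum (\<lambda>v. vsmul (y v) (st ?R (delta [v]))) ?Y)"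
    by (rule bar_vsum_right[symmetric])
  also have "vsum (\<lambda>v. vsmul (y v) (st ?R (delta [v]))) ?Y = st ?R (vsum (\<lambda>v. vsmul (y v) (delta [v])) ?Y)"
    by (rule st_lsum_right[OF ST finY dT RT, symmetric])
  also have "vsum (\<lambda>v. vsmul (y v) (delta [v])) ?Y = emb y"
    by (rule emb_decomp[OF assms(2), symmetric])
  also have "st ?R (emb y) = vsum (\<lambda>i. bars (map emb (xs[i := tvcat (xs!i) y]))) {..<length xs}"
    by (rule Cons.IH[OF xsT])
  also have "bar (emb x) (vsum (\<lambda>i. bars (map emb (xs[i := tvcat (xs!i) y]))) {..<length xs})
      = vsum (\<lambda>i. bar (emb x) (bars (map emb (xs[i := tvcat (xs!i) y])))) {..<length xs}"
    by (rule bar_vsum_right')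
  also have "vadd (bar (emb (tvcat x y)) ?R) (vsum (\<lambda>i. bar (emb x) (bars (map emb (xs[i := tvcat (xs!i) y])))) {..<length xs})
     = vsum (\<lambda>i. bars (map emb ((x#xs)[i := tvcat ((x#xs)!i) y]))) {..<length (x#xs)}"
    by (simp add: fun_eq_iff vadd_def vsum_def sum.lessThan_Suc_shift bars_def del: sum.lessThan_Suc)
  finally show ?case .
qed

end


definition Bs :: "(nat \<Rightarrow> ('a,'k::comm_ring_1) tv) \<Rightarrow> nat \<Rightarrow> ('a,'k) tt" where
  "Bs X m = bars (map (\<lambda>i. emb (X i)) [1..<m+1])"

definition U :: "(nat \<Rightarrow> ('a,'k::comm_ring_1) tv) \<Rightarrow> (nat \<Rightarrow> ('a,'k) tv) \<Rightarrow> nat \<Rightarrow> (nat \<Rightarrow> nat) \<Rightarrow> nat \<Rightarrow> ('a,'k) tv" where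
  "U S W k f i = (if i \<in> f ` {1..k} then tvcat (S i) (W (inv_into {1..k} f i)) else S i)"

definition Fs :: "nat \<Rightarrow> nat \<Rightarrow> (nat \<Rightarrow> nat) set" where
  "Fs n k = {f. f \<in> {1..k} \<rightarrow>\<^sub>E {1..n} \<and> inj_on f {1..k}}"

lemma Bs_cong: "(\<And>i. i \<in> {1..m} \<Longrightarrow> X i = X' i) \<Longrightarrow> Bs X m = Bs X' m"
  unfolding Bs_def by (intro arg_cong[where f=bars] map_cong) auto

lemma Bs_list: "Bs X m = bars (map emb (map X [1..<m+1]))"
  by (simp add: Bs_def comp_def)

lemma Bs_TTp: "(\<And>i. i \<in> {1..m} \<Longrightarrow> X i \<in> TVp) \<Longrightarrow> Bs X m \<in> TTp"
  unfolding Bs_def by (rule bars_TTp) (auto intro: emb_TTp)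

lemma Bs_Suc: "Bs X (Suc m) = bar (Bs X m) (emb (X (Suc m)))"
  by (simp add: Bs_def bars_append bars_single)

lemma Bs_0: "Bs X 0 = one"
  by (simp add: Bs_def bars_def)

lemma Fs_finite: "finite (Fs n k)"
proof -
  have "Fs n k \<subseteq> {1..k} \<rightarrow>\<^sub>E {1..n}" by (auto simp: Fs_def)
  then show ?thesis by (rule finite_subset) (simp add: finite_PiE)
qed

lemma Fs_0: "Fs n 0 = {\<lambda>_. undefined}"
  by (simp add: Fs_def)

lemma U_TVp:
  assumes "f \<in> Fs n k" "\<forall>i\<in>{1..n}. S i \<in> TVp" "\<forall>j\<in>{1..k}. W j \<in> TVp" "i \<in> {1..n}"
  shows "U S W k f i \<in> TVp"
proof (cases "i \<in> f ` {1..k}")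
  case True
  then have "inv_into {1..k} f i \<in> {1..k}" by (rule inv_into_into)
  then show ?thesis using True assms by (simp add: U_def tvcat_TVp)
next
  case False then show ?thesis using assms by (simp add: U_def)
qed

lemma list_upd_map:
  assumes "i < m"
  shows "(map X [Suc 0..<Suc m])[i := v] = map (X(Suc i := v)) [Suc 0..<Suc m]"
  by (rule nth_equalityI) (use assms in \<open>auto simp: nth_list_update simp del: upt_Suc\<close>)

context
  fixes st :: "('a,'k::field) tt \<Rightarrow> ('a,'k) tt \<Rightarrow> ('a,'k) tt"
  assumes ST: "is_star_ext st"
begin

lemma st_word_fun:
  assumes "\<And>i. i \<in> {1..m} \<Longrightarrow> X i \<in> TVp" "y \<in> TVp"
  shows "st (Bs X m) (emb y) = vsum (\<lambda>i. Bs (X(i := tvcat (X i) y)) m) {1..m}"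
proof -
  have "set (map X [1..<m+1]) \<subseteq> TVp" using assms(1) by auto
  have len: "length (map X [1..<m+1]) = m" by simp
  have "st (Bs X m) (emb y) = vsum (\<lambda>i. bars (map emb ((map X [1..<m+1])[i := tvcat ((map X [1..<m+1])!i) y]))) {..<m}"
    unfolding Bs_list using st_word[OF ST \<open>set (map X [1..<m+1]) \<subseteq> TVp\<close> assms(2)] unfolding len .
  also have "\<dots> = vsum (\<lambda>i. Bs (X(Suc i := tvcat (X (Suc i)) y)) m) {..<m}"
    unfolding vsum_def Bs_list
    by (intro ext sum.cong refl) (simp add: list_upd_map nth_upt add.commute del: upt_Suc)
  also have "\<dots> = vsum (\<lambda>i. Bs (X(i := tvcat (X i) y)) m) (Suc ` {..<m})"
    unfolding vsum_def by (subst sum.reindex) auto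
  also have "Suc ` {..<m} = {1..m}" by (simp add: image_Suc_lessThan)
  finally show ?thesis .
qed

end


lemma Fs_D: assumes "f \<in> Fs n k"
  shows "inj_on f {1..k}" "\<And>x. x \<notin> {1..k} \<Longrightarrow> f x = undefined" "\<And>x. x \<in> {1..k} \<Longrightarrow> f x \<in> {1..n}"
  using assms by (auto simp: Fs_def PiE_def extensional_def)

lemma Fs_I: assumes "inj_on f {1..k}" "\<And>x. x \<notin> {1..k} \<Longrightarrow> f x = undefined" "\<And>x. x \<in> {1..k} \<Longrightarrow> f x \<in> {1..n}"
  shows "f \<in> Fs n k"
  using assms by (auto simp: Fs_def PiE_def extensional_def)

lemma dom_Suc: "{1..Suc k} = insert (Suc k) {1..k}" by auto

lemma upd_inj:
  assumes "inj_on f {1..k}" "i \<notin> f ` {1..k}"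
  shows "inj_on (f(Suc k := i)) {1..Suc k}"
proof -
  have "inj_on (f(Suc k := i)) {1..k}"
    using assms(1) by (rule inj_on_cong[THEN iffD1, rotated]) auto
  moreover have "(f(Suc k := i)) ` {1..k} = f ` {1..k}" by auto
  ultimately show ?thesis unfolding dom_Suc using assms(2) by (simp add: inj_on_insert)
qed

lemma term1:
  assumes f: "f \<in> Fs n k" and i: "i \<notin> f ` {1..k}"
  shows "((U S W k f)(i := tvcat (U S W k f i) (W (Suc k)))) l = U S W (Suc k) (f(Suc k := i)) l"
proof -
  let ?g = "f(Suc k := i)"
  have inj: "inj_on f {1..k}" using Fs_D[OF f] by simp
  have ginj: "inj_on ?g {1..Suc k}" using upd_inj[OF inj i] .
  have gim: "?g ` {1..Suc k} = insert i (f ` {1..k})" unfolding dom_Suc by auto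
  show ?thesis
  proof (cases "l = i")
    case True
    have "inv_into {1..Suc k} ?g i = Suc k" by (rule inv_into_f_eq[OF ginj]) auto
    then show ?thesis using True i gim by (simp add: U_def)
  next
    case False
    show ?thesis
    proof (cases "l \<in> f ` {1..k}")
      case True
      then obtain j where j: "j \<in> {1..k}" "l = f j" by auto
      have "inv_into {1..k} f l = j" by (rule inv_into_f_eq[OF inj j(1) j(2)[symmetric]])
      moreover have "inv_into {1..Suc k} ?g l = j" by (rule inv_into_f_eq[OF ginj]) (use j in auto)
      ultimately show ?thesis using False True gim by (simp add: U_def)
    next
      case nt: False
      then show ?thesis using False gim by (simp add: U_def)
    qed
  qed
qed

lemma term2:
  assumes f: "f \<in> Fs n k" and j: "j \<in> {1..k}"
  shows "((U S W k f)(f j := tvcat (U S W k f (f j)) y)) l = U S (W(j := tvcat (W j) y)) k f l"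
proof -
  have inj: "inj_on f {1..k}" using Fs_D[OF f] by simp
  have ij: "inv_into {1..k} f (f j) = j" using inj j by (simp add: inv_into_f_f)
  show ?thesis
  proof (cases "l = f j")
    case True
    then show ?thesis using j ij by (simp add: U_def tvcat_assoc)
  next
    case False
    show ?thesis
    proof (cases "l \<in> f ` {1..k}")
      case True
      then obtain j' where j': "j' \<in> {1..k}" "l = f j'" by auto
      have "inv_into {1..k} f l = j'" by (rule inv_into_f_eq[OF inj j'(1) j'(2)[symmetric]])
      moreover have "j' \<noteq> j" using False j' by auto
      ultimately show ?thesis using False True by (simp add: U_def)
    next
      case nt: False
      then show ?thesis using False by (simp add: U_def)
    qed
  qed
qed

lemma part1:
  "(\<Sum>f\<in>Fs n k. \<Sum>i\<in>{1..n} - f ` {1..k}. h (f(Suc k := i))) = (\<Sum>g\<in>Fs n (Suc k). h g)"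
proof -
  have "(\<Sum>f\<in>Fs n k. \<Sum>i\<in>{1..n} - f ` {1..k}. h (f(Suc k := i)))
      = (\<Sum>(f,i)\<in>(SIGMA f:Fs n k. {1..n} - f ` {1..k}). h (f(Suc k := i)))"
    by (rule sum.Sigma) (auto simp: Fs_finite)
  also have "\<dots> = (\<Sum>g\<in>Fs n (Suc k). h g)"
  proof (rule sum.reindex_bij_witness[where j = "\<lambda>(f,i). f(Suc k := i)" and i = "\<lambda>g. (g(Suc k := undefined), g (Suc k))"])
    fix a assume a: "a \<in> (SIGMA f:Fs n k. {1..n} - f ` {1..k})"
    then obtain f i where fi: "a = (f,i)" "f \<in> Fs n k" "i \<in> {1..n}" "i \<notin> f ` {1..k}" by auto
    have fk: "f (Suc k) = undefined" using Fs_D(2)[OF fi(2)] by simp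
    show "(\<lambda>g. (g(Suc k := undefined), g (Suc k))) (case a of (f, i) \<Rightarrow> f(Suc k := i)) = a"
      using fi fk by (simp add: fun_upd_idem)
    show "(case a of (f, i) \<Rightarrow> f(Suc k := i)) \<in> Fs n (Suc k)"
    proof -
      have "f(Suc k := i) \<in> Fs n (Suc k)"
      proof (rule Fs_I)
        show "inj_on (f(Suc k := i)) {1..Suc k}" using upd_inj[OF Fs_D(1)[OF fi(2)] fi(4)] .
        show "(f(Suc k := i)) x = undefined" if "x \<notin> {1..Suc k}" for x
          using that Fs_D(2)[OF fi(2), of x] by auto
        show "(f(Suc k := i)) x \<in> {1..n}" if "x \<in> {1..Suc k}" for x
          using that Fs_D(3)[OF fi(2), of x] fi(3) by (cases "x = Suc k") auto
      qed
      then show ?thesis using fi by simp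
    qed
    show "h (case a of (f, i) \<Rightarrow> f(Suc k := i)) = (case a of (f, i) \<Rightarrow> h (f(Suc k := i)))"
      using fi by simp
  next
    fix g assume g: "g \<in> Fs n (Suc k)"
    show "(case (g(Suc k := undefined), g (Suc k)) of (f, i) \<Rightarrow> f(Suc k := i)) = g" by simp
    have ginj: "inj_on g {1..Suc k}" using Fs_D(1)[OF g] .
    have f'inj: "inj_on (g(Suc k := undefined)) {1..k}"
    proof -
      have "inj_on g {1..k}" using ginj by (rule inj_on_subset) auto
      then show ?thesis by (rule inj_on_cong[THEN iffD1, rotated]) auto
    qed
    have "g(Suc k := undefined) \<in> Fs n k"
    proof (rule Fs_I[OF f'inj])
      show "(g(Suc k := undefined)) x = undefined" if "x \<notin> {1..k}" for x
        using that Fs_D(2)[OF g, of x] by auto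
      show "(g(Suc k := undefined)) x \<in> {1..n}" if "x \<in> {1..k}" for x
        using that Fs_D(3)[OF g, of x] by auto
    qed
    moreover have "g (Suc k) \<in> {1..n}" using Fs_D(3)[OF g, of "Suc k"] by auto
    moreover have "g (Suc k) \<notin> (g(Suc k := undefined)) ` {1..k}"
    proof
      assume "g (Suc k) \<in> (g(Suc k := undefined)) ` {1..k}"
      then obtain x where x: "x \<in> {1..k}" "g (Suc k) = g x" by auto
      have "Suc k = x" by (rule inj_onD[OF ginj x(2)]) (use x in auto)
      then show False using x by auto
    qed
    ultimately show "(g(Suc k := undefined), g (Suc k)) \<in> (SIGMA f:Fs n k. {1..n} - f ` {1..k})" by simp
  qed
  finally show ?thesis .
qed



lemma comb:
  "(\<Sum>g\<in>Fs n (Suc k). Bs (U S W (Suc k) g) n s) =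
    (\<Sum>f\<in>Fs n k. \<Sum>i\<in>{1..n}. Bs ((U S W k f)(i := tvcat (U S W k f i) (W (Suc k)))) n s)
    - (\<Sum>j\<in>{1..k}. \<Sum>f\<in>Fs n k. Bs (U S (W(j := tvcat (W j) (W (Suc k)))) k f) n s)"
proof -
  let ?T = "\<lambda>f i. Bs ((U S W k f)(i := tvcat (U S W k f i) (W (Suc k)))) n s"
  let ?P1 = "\<lambda>f. (\<Sum>i\<in>{1..n} - f`{1..k}. Bs (U S W (Suc k) (f(Suc k := i))) n s)"
  let ?P2 = "\<lambda>f. (\<Sum>j\<in>{1..k}. Bs (U S (W(j := tvcat (W j) (W (Suc k)))) k f) n s)"
  have key: "(\<Sum>i\<in>{1..n}. ?T f i) = ?P1 f + ?P2 f" if f: "f \<in> Fs n k" for f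
  proof -
    have sub: "f ` {1..k} \<subseteq> {1..n}" using Fs_D(3)[OF f] by auto
    have "(\<Sum>i\<in>{1..n}. ?T f i) = (\<Sum>i\<in>{1..n} - f`{1..k}. ?T f i) + (\<Sum>i\<in>f`{1..k}. ?T f i)"
      by (rule sum.subset_diff[OF sub]) simp
    also have "(\<Sum>i\<in>{1..n} - f`{1..k}. ?T f i) = ?P1 f"
    proof (rule sum.cong[OF refl])
      fix i assume "i \<in> {1..n} - f`{1..k}"
      then have "i \<notin> f ` {1..k}" by simp
      then have "(U S W k f)(i := tvcat (U S W k f i) (W (Suc k))) = U S W (Suc k) (f(Suc k := i))"
        by (intro ext term1[OF f])
      then show "?T f i = Bs (U S W (Suc k) (f(Suc k := i))) n s" by simp
    qed
    also have "(\<Sum>i\<in>f`{1..k}. ?T f i) = (\<Sum>j\<in>{1..k}. ?T f (f j))"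
      by (rule sum.reindex_cong[OF Fs_D(1)[OF f] refl refl])
    also have "\<dots> = ?P2 f"
    proof (rule sum.cong[OF refl])
      fix j assume j: "j \<in> {1..k}"
      have "(U S W k f)(f j := tvcat (U S W k f (f j)) (W (Suc k))) = U S (W(j := tvcat (W j) (W (Suc k)))) k f"
        by (intro ext term2[OF f j])
      then show "?T f (f j) = Bs (U S (W(j := tvcat (W j) (W (Suc k)))) k f) n s" by simp
    qed
    finally show ?thesis .
  qed
  have "(\<Sum>f\<in>Fs n k. \<Sum>i\<in>{1..n}. ?T f i) = (\<Sum>f\<in>Fs n k. ?P1 f + ?P2 f)"
    by (rule sum.cong[OF refl]) (rule key)
  also have "\<dots> = (\<Sum>f\<in>Fs n k. ?P1 f) + (\<Sum>f\<in>Fs n k. ?P2 f)" by (rule sum.distrib)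
  also have "(\<Sum>f\<in>Fs n k. ?P1 f) = (\<Sum>g\<in>Fs n (Suc k). Bs (U S W (Suc k) g) n s)"
    by (rule part1)
  also have "(\<Sum>f\<in>Fs n k. ?P2 f) = (\<Sum>j\<in>{1..k}. \<Sum>f\<in>Fs n k. Bs (U S (W(j := tvcat (W j) (W (Suc k)))) k f) n s)"
    by (rule sum.swap)
  finally have X: "(\<Sum>f\<in>Fs n k. \<Sum>i\<in>{1..n}. ?T f i) = (\<Sum>g\<in>Fs n (Suc k). Bs (U S W (Suc k) g) n s) + (\<Sum>j\<in>{1..k}. \<Sum>f\<in>Fs n k. Bs (U S (W(j := tvcat (W j) (W (Suc k)))) k f) n s)" .
  show ?thesis unfolding X by (simp only: add_diff_cancel_right')
qed

lemma vsum_cong: "(\<And>a. a \<in> A \<Longrightarrow> F a = G a) \<Longrightarrow> vsum F A = vsum G A"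
  by (simp add: vsum_def fun_eq_iff)

context
  fixes st :: "('a,'k::field) tt \<Rightarrow> ('a,'k) tt \<Rightarrow> ('a,'k) tt"
  assumes ST: "is_star_ext st"
begin

lemma main_ind:
  assumes S: "\<forall>i\<in>{1..n}. S i \<in> TVp"
  shows "\<forall>W. (\<forall>j\<in>{1..k}. W j \<in> TVp) \<longrightarrow> st (Bs S n) (Bs W k) = vsum (\<lambda>f. Bs (U S W k f) n) (Fs n k)"
proof (induction k)
  case 0
  have BST: "Bs S n \<in> TTp" using S by (intro Bs_TTp) auto
  show ?case
  proof (intro allI impI)
    fix W :: "nat \<Rightarrow> ('a,'k) tv"
    have "U S W 0 (\<lambda>_. undefined) = S" by (simp add: fun_eq_iff U_def)
    then show "st (Bs S n) (Bs W 0) = vsum (\<lambda>f. Bs (U S W 0 f) n) (Fs n 0)"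
      using st_one_right[OF ST BST] by (simp add: Bs_0 Fs_0 vsum_def)
  qed
next
  case (Suc k)
  show ?case
  proof (intro allI impI)
    fix W :: "nat \<Rightarrow> ('a,'k) tv"
    assume WT: "\<forall>j\<in>{1..Suc k}. W j \<in> TVp"
    let ?y = "W (Suc k)"
    let ?Wj = "\<lambda>j. W(j := tvcat (W j) ?y)"
    have yT: "?y \<in> TVp" using WT by simp
    have eyT: "emb ?y \<in> TTp" using yT by (rule emb_TTp)
    have WkT: "\<forall>j\<in>{1..k}. W j \<in> TVp" using WT by auto
    have BST: "Bs S n \<in> TTp" using S by (intro Bs_TTp) auto
    have BWT: "Bs W k \<in> TTp" using WkT by (intro Bs_TTp) auto
    have WjT: "\<forall>l\<in>{1..k}. ?Wj j l \<in> TVp" if "j \<in> {1..k}" for j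
      using WkT yT that by (auto intro: tvcat_TVp)
    have UT: "Bs (U S W k f) n \<in> TTp" if "f \<in> Fs n k" for f
      by (rule Bs_TTp) (rule U_TVp[OF that S WkT], simp)
    have e1: "st (Bs S n) (Bs W k) = vsum (\<lambda>f. Bs (U S W k f) n) (Fs n k)"
      using Suc.IH WkT by blast
    have e2: "st (vsum (\<lambda>f. Bs (U S W k f) n) (Fs n k)) (emb ?y) = vsum (\<lambda>f. st (Bs (U S W k f) n) (emb ?y)) (Fs n k)"
      by (rule st_sum_left[OF ST Fs_finite UT eyT])
    have e3: "st (Bs (U S W k f) n) (emb ?y) = vsum (\<lambda>i. Bs ((U S W k f)(i := tvcat (U S W k f i) ?y)) n) {1..n}"
      if "f \<in> Fs n k" for f
      by (rule st_word_fun[OF ST _ yT]) (rule U_TVp[OF that S WkT], simp)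
    have e4: "st (Bs W k) (emb ?y) = vsum (\<lambda>j. Bs (?Wj j) k) {1..k}"
      by (rule st_word_fun[OF ST _ yT]) (use WkT in simp)
    have e5: "st (Bs S n) (vsum (\<lambda>j. Bs (?Wj j) k) {1..k}) = vsum (\<lambda>j. st (Bs S n) (Bs (?Wj j) k)) {1..k}"
      by (rule st_sum_right[OF ST _ _ BST]) (use WjT in \<open>auto intro!: Bs_TTp\<close>)
    have e6: "st (Bs S n) (Bs (?Wj j) k) = vsum (\<lambda>f. Bs (U S (?Wj j) k f) n) (Fs n k)" if "j \<in> {1..k}" for j
      using Suc.IH WjT[OF that] by blast
    have "st (Bs S n) (Bs W (Suc k)) = st (Bs S n) (bar (Bs W k) (emb ?y))" by (simp add: Bs_Suc)
    also have "\<dots> = vsub (st (st (Bs S n) (Bs W k)) (emb ?y)) (st (Bs S n) (st (Bs W k) (emb ?y)))"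
      by (rule st_recB[OF ST BST BWT yT])
    also have "\<dots> = vsub (vsum (\<lambda>f. vsum (\<lambda>i. Bs ((U S W k f)(i := tvcat (U S W k f i) ?y)) n) {1..n}) (Fs n k))
                        (vsum (\<lambda>j. vsum (\<lambda>f. Bs (U S (?Wj j) k f) n) (Fs n k)) {1..k})"
      unfolding e1 e2 e4 e5 by (simp only: vsum_cong[OF e3] vsum_cong[OF e6])
    also have "\<dots> = vsum (\<lambda>f. Bs (U S W (Suc k) f) n) (Fs n (Suc k))"
      by (simp add: fun_eq_iff vsub_def vsum_def comb)
    finally show "st (Bs S n) (Bs W (Suc k)) = vsum (\<lambda>f. Bs (U S W (Suc k) f) n) (Fs n (Suc k))" .
  qed
qed

end


lemma factor_eq:
  fixes st :: "('a,'k::field) tt \<Rightarrow> ('a,'k) tt \<Rightarrow> ('a,'k) tt"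
  assumes ST: "is_star_ext st" and f: "f \<in> Fs n k" and Si: "S i \<in> TVp" and WT: "\<forall>j\<in>{1..k}. W j \<in> TVp"
  shows "st (emb (S i)) (W_sub W {j\<in>{1..k}. f j = i}) = emb (U S W k f i)"
proof (cases "i \<in> f ` {1..k}")
  case True
  let ?j = "inv_into {1..k} f i"
  have inj: "inj_on f {1..k}" using Fs_D(1)[OF f] .
  have j0: "?j \<in> {1..k}" using True by (rule inv_into_into)
  have fj: "f ?j = i" using True by (rule f_inv_into_f)
  have set: "{j\<in>{1..k}. f j = i} = {?j}"
  proof (intro equalityI subsetI)
    fix j assume "j \<in> {j\<in>{1..k}. f j = i}"
    then have "j \<in> {1..k}" "f j = f ?j" using fj by auto
    then have "j = ?j" using inj j0 by (simp add: inj_on_eq_iff)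
    then show "j \<in> {?j}" by simp
  qed (use j0 fj in auto)
  have "W_sub W {?j} = emb (W ?j)" by (simp add: W_sub_def bars_single)
  then show ?thesis unfolding set using True st_emb[OF ST Si] WT j0 by (simp add: U_def)
next
  case False
  then have set: "{j\<in>{1..k}. f j = i} = {}" by auto
  have "W_sub W {} = one" by (simp add: W_sub_def bars_def)
  then show ?thesis unfolding set using False st_one_right[OF ST emb_TTp[OF Si]] by (simp add: U_def)
qed

theorem proposition4p7:
  fixes st :: "('a,'k::field) tt \<Rightarrow> ('a,'k) tt \<Rightarrow> ('a,'k) tt"
    and S W :: "nat \<Rightarrow> ('a,'k) tv"
    and n k :: nat
  assumes "is_star_ext st"
    and "n \<ge> 1" and "k \<ge> 1"
    and "\<forall>i\<in>{1..n}. S i \<in> TVp"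
    and "\<forall>j\<in>{1..k}. W j \<in> TVp"
  shows "st (bars (map (\<lambda>i. emb (S i)) [1..<n+1])) (bars (map (\<lambda>j. emb (W j)) [1..<k+1]))
         = vsum (\<lambda>f. bars (map (\<lambda>i. st (emb (S i)) (W_sub W {j\<in>{1..k}. f j = i})) [1..<n+1]))
                {f. f \<in> {1..k} \<rightarrow>\<^sub>E {1..n} \<and> inj_on f {1..k}}"
proof -
  have main: "st (Bs S n) (Bs W k) = vsum (\<lambda>f. Bs (U S W k f) n) (Fs n k)"
    using main_ind[OF assms(1) assms(4)] assms(5) by blast
  have Fseq: "{f. f \<in> {1..k} \<rightarrow>\<^sub>E {1..n} \<and> inj_on f {1..k}} = Fs n k" by (rule Fs_def[symmetric])
  have R: "vsum (\<lambda>f. bars (map (\<lambda>i. st (emb (S i)) (W_sub W {j\<in>{1..k}. f j = i})) [1..<n+1])) (Fs n k)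
         = vsum (\<lambda>f. Bs (U S W k f) n) (Fs n k)"
  proof (rule vsum_cong)
    fix f assume f: "f \<in> Fs n k"
    show "bars (map (\<lambda>i. st (emb (S i)) (W_sub W {j\<in>{1..k}. f j = i})) [1..<n+1]) = Bs (U S W k f) n"
      unfolding Bs_def
    proof (intro arg_cong[where f=bars] map_cong refl)
      fix i assume "i \<in> set [1..<n+1]"
      then have "i \<in> {1..n}" by auto
      then show "st (emb (S i)) (W_sub W {j\<in>{1..k}. f j = i}) = emb (U S W k f i)"
        using factor_eq[OF assms(1) f _ assms(5)] assms(4) by blast
    qed
  qed
  show ?thesis unfolding Fseq R using main unfolding Bs_def .
qed


end
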